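(* If $\mathcal{F}:\mathcal{T}^Y\to\mathcal{T}^Z$ is a cover between trees of spheres, then the underlying map $F:T^Y\to T^Z$ is surjective (on vertices and edges).
   Context: Trees are finite connected graphs without cycles (vertex set $V$, edges $2$-element subsets of $V$, $E_v$ the set of edges containing $v$), regarded as the set $V\sqcup E$; leaves are vertices of valence $1$, the others are internal vertices ($IV$). A tree of spheres $\mathcal{T}^X$ marked by a finite set $X$ ($\ge3$ elements) consists of a tree $T^X$ whose leaf set is $X$ and, for each internal vertex $v$, a topological $2$-sphere $\mathcal{S}_v$ and an injection $i_v:E_v\to\mathcal{S}_v$; $X_v:=i_v(E_v)$. A cover $\mathcal{F}:\mathcal{T}^Y\to\mathcal{T}^Z$ consists of a map $F:T^Y\to T^Z$ sending vertices to vertices and each edge $\{v,w\}$ to the edge $\{F(v),F(w)\}$, with $F(Y)\subseteq Z$ and $F(IV^Y)\subseteq IV^Z$, and for each $v\in IV^Y$, $w=F(v)$, a topological branched covering $f_v:\mathcal{S}_v\to\mathcal{S}_w$ such that $f_v:\mathcal{S}_v\setminus Y_v\to\mathcal{S}_w\setminus Z_w$ is a covering map, $f_v\circ i_v=i_w\circ F$ on $E_v$, and for an edge $e=\{v_1,v_2\}$ between internal vertices $\deg_{i_{v_1}(e)}f_{v_1}=\deg_{i_{v_2}(e)}f_{v_2}$. *)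

theory Defs
  imports "HOL-Analysis.Analysis"
begin

definition adj :: "'v set set \<Rightarrow> ('v \<times> 'v) set" where
  "adj E = {(a, b). {a, b} \<in> E}"

definition has_cycle :: "'v set set \<Rightarrow> bool" where
  "has_cycle E \<longleftrightarrow> (\<exists>cs. length cs \<ge> 3 \<and> distinct cs \<and>
      (\<forall>k < length cs. {cs ! k, cs ! ((k + 1) mod length cs)} \<in> E))"

definition is_tree :: "'v set \<Rightarrow> 'v set set \<Rightarrow> bool" where
  "is_tree V E \<longleftrightarrow> finite V \<and> V \<noteq> {} \<and>
     (\<forall>e\<in>E. e \<subseteq> V \<and> card e = 2) \<and>
     (\<forall>u\<in>V. \<forall>w\<in>V. (u, w) \<in> (adj E)\<^sup>*) \<and>
     \<not> has_cycle E"

definition edges_at :: "'v set set \<Rightarrow> 'v \<Rightarrow> 'v set set" where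
  "edges_at E v = {e \<in> E. v \<in> e}"

definition leaves :: "'v set \<Rightarrow> 'v set set \<Rightarrow> 'v set" where
  "leaves V E = {v \<in> V. card (edges_at E v) = 1}"

definition internal_vertices :: "'v set \<Rightarrow> 'v set set \<Rightarrow> 'v set" where
  "internal_vertices V E = V - leaves V E"

definition tree_of_spheres ::
  "'v set \<Rightarrow> 'v set set \<Rightarrow> 'v set \<Rightarrow> ('v \<Rightarrow> 'p::topological_space set)
     \<Rightarrow> ('v \<Rightarrow> 'v set \<Rightarrow> 'p) \<Rightarrow> bool" where
  "tree_of_spheres V E X S i \<longleftrightarrow>
     is_tree V E \<and> leaves V E = X \<and> finite X \<and> card X \<ge> 3 \<and>
     (\<forall>v \<in> internal_vertices V E.
        S v homeomorphic (sphere (0::real^3) 1) \<and>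
        inj_on (i v) (edges_at E v) \<and> i v ` edges_at E v \<subseteq> S v)"

definition marked_points :: "'v set set \<Rightarrow> ('v \<Rightarrow> 'v set \<Rightarrow> 'p) \<Rightarrow> 'v \<Rightarrow> 'p set" where
  "marked_points E i v = i v ` edges_at E v"

definition has_local_degree ::
  "'a::topological_space set \<Rightarrow> 'b::topological_space set \<Rightarrow> ('a \<Rightarrow> 'b) \<Rightarrow> 'a \<Rightarrow> nat \<Rightarrow> bool" where
  "has_local_degree A B f x d \<longleftrightarrow> d \<ge> 1 \<and>
     (\<exists>U W \<phi> \<phi>' \<psi> \<psi>'. openin (top_of_set A) U \<and> x \<in> U \<and>
        openin (top_of_set B) W \<and> f ` U \<subseteq> W \<and>
        homeomorphism U (ball (0::complex) 1) \<phi> \<phi>' \<and> \<phi> x = 0 \<and>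
        homeomorphism W (ball (0::complex) 1) \<psi> \<psi>' \<and> \<psi> (f x) = 0 \<and>
        (\<forall>y\<in>U. \<psi> (f y) = (\<phi> y) ^ d))"

definition local_degree ::
  "'a::topological_space set \<Rightarrow> 'b::topological_space set \<Rightarrow> ('a \<Rightarrow> 'b) \<Rightarrow> 'a \<Rightarrow> nat" where
  "local_degree A B f x = (THE d. has_local_degree A B f x d)"

definition branched_covering ::
  "'a::topological_space set \<Rightarrow> 'b::topological_space set \<Rightarrow> ('a \<Rightarrow> 'b) \<Rightarrow> bool" where
  "branched_covering A B f \<longleftrightarrow> continuous_on A f \<and> f ` A = B \<and>
     (\<forall>x\<in>A. \<exists>d. has_local_degree A B f x d)"

definition tree_cover ::
  "'v set \<Rightarrow> 'v set set \<Rightarrow> 'v set \<Rightarrow> ('v \<Rightarrow> 'p::topological_space set) \<Rightarrow> ('v \<Rightarrow> 'v set \<Rightarrow> 'p)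
   \<Rightarrow> 'w set \<Rightarrow> 'w set set \<Rightarrow> 'w set \<Rightarrow> ('w \<Rightarrow> 'q::topological_space set) \<Rightarrow> ('w \<Rightarrow> 'w set \<Rightarrow> 'q)
   \<Rightarrow> ('v \<Rightarrow> 'w) \<Rightarrow> ('v \<Rightarrow> 'p \<Rightarrow> 'q) \<Rightarrow> bool" where
  "tree_cover VY EY Y SY iY VZ EZ Z SZ iZ F f \<longleftrightarrow>
     tree_of_spheres VY EY Y SY iY \<and> tree_of_spheres VZ EZ Z SZ iZ \<and>
     F ` VY \<subseteq> VZ \<and>
     (\<forall>v w. {v, w} \<in> EY \<longrightarrow> {F v, F w} \<in> EZ) \<and>
     F ` Y \<subseteq> Z \<and>
     F ` internal_vertices VY EY \<subseteq> internal_vertices VZ EZ \<and>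
     (\<forall>v \<in> internal_vertices VY EY.
        branched_covering (SY v) (SZ (F v)) (f v) \<and>
        covering_space (SY v - marked_points EY iY v) (f v)
                       (SZ (F v) - marked_points EZ iZ (F v)) \<and>
        (\<forall>e \<in> edges_at EY v. f v (iY v e) = iZ (F v) (F ` e))) \<and>
     (\<forall>v1 v2. {v1, v2} \<in> EY \<longrightarrow> v1 \<in> internal_vertices VY EY \<longrightarrow>
        v2 \<in> internal_vertices VY EY \<longrightarrow>
        local_degree (SY v1) (SZ (F v1)) (f v1) (iY v1 {v1, v2}) =
        local_degree (SY v2) (SZ (F v2)) (f v2) (iY v2 {v1, v2}))"

end

theory Submission
  imports Defs
begin

lemma card2_edge: "card e = 2 \<Longrightarrow> v \<in> e \<Longrightarrow> \<exists>u. u \<noteq> v \<and> e = {v, u}"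
proof -
  assume "card e = 2" "v \<in> e"
  then obtain x y where "e = {x, y}" "x \<noteq> y" unfolding card_2_iff by blast
  with \<open>v \<in> e\<close> show ?thesis by auto
qed

lemma tcD:
  assumes "tree_cover VY EY Y SY iY VZ EZ Z SZ iZ F f"
  shows "tree_of_spheres VY EY Y SY iY" "tree_of_spheres VZ EZ Z SZ iZ"
    "F ` VY \<subseteq> VZ" "\<And>v w. {v, w} \<in> EY \<Longrightarrow> {F v, F w} \<in> EZ"
    "F ` Y \<subseteq> Z" "F ` internal_vertices VY EY \<subseteq> internal_vertices VZ EZ"
    "\<And>v. v \<in> internal_vertices VY EY \<Longrightarrow>
        branched_covering (SY v) (SZ (F v)) (f v) \<and>
        covering_space (SY v - marked_points EY iY v) (f v)
                       (SZ (F v) - marked_points EZ iZ (F v)) \<and>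
        (\<forall>e \<in> edges_at EY v. f v (iY v e) = iZ (F v) (F ` e))"
  using assms unfolding tree_cover_def by blast+

lemma tosD:
  assumes "tree_of_spheres V E X S i"
  shows "\<forall>e\<in>E. e \<subseteq> V \<and> card e = 2" "\<forall>u\<in>V. \<forall>w\<in>V. (u, w) \<in> (adj E)\<^sup>*"
    "V \<noteq> {}" "leaves V E = X"
    "\<And>v. v \<in> internal_vertices V E \<Longrightarrow> inj_on (i v) (edges_at E v) \<and> i v ` edges_at E v \<subseteq> S v"
  using assms unfolding tree_of_spheres_def is_tree_def by blast+

lemma step_lemma:
  assumes C: "tree_cover VY EY Y SY iY VZ EZ Z SZ iZ F f"
    and v: "v \<in> VY" and e': "e' \<in> EZ" and Fv: "F v \<in> e'"
  shows "\<exists>e\<in>EY. v \<in> e \<and> F ` e = e'"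
proof -
  note TY = tcD(1)[OF C] and TZ = tcD(2)[OF C]
  note edgesY = tosD(1)[OF TY] and edgesZ = tosD(1)[OF TZ]
  have imgE: "F ` e \<in> EZ" if "e \<in> EY" for e
  proof -
    have "card e = 2" using edgesY that by blast
    then obtain a b where ab: "e = {a, b}" using card_2_iff[of e] by blast
    have "{F a, F b} \<in> EZ" using tcD(4)[OF C, of a b] that ab by simp
    then show ?thesis using ab by simp
  qed
  show ?thesis
  proof (cases "v \<in> Y")
    case True
    have "F v \<in> Z" using tcD(5)[OF C] True by auto
    hence cZ: "card (edges_at EZ (F v)) = 1" using tosD(4)[OF TZ] unfolding leaves_def by auto
    have "v \<in> leaves VY EY" using tosD(4)[OF TY] True by auto
    hence "card (edges_at EY v) = 1" unfolding leaves_def by auto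
    then obtain e where e: "edges_at EY v = {e}" by (auto simp: card_1_singleton_iff)
    hence eE: "e \<in> EY" "v \<in> e" unfolding edges_at_def by auto
    have A1: "F ` e \<in> edges_at EZ (F v)" using imgE[OF eE(1)] eE(2) unfolding edges_at_def by auto
    have A2: "e' \<in> edges_at EZ (F v)" using e' Fv unfolding edges_at_def by auto
    obtain z where zs: "edges_at EZ (F v) = {z}" using cZ by (auto simp: card_1_singleton_iff)
    have z1: "F ` e = z" using A1[unfolded zs] by (rule singletonD)
    have z2: "e' = z" using A2[unfolded zs] by (rule singletonD)
    have "F ` e = e'" using z1 z2 by (rule trans_sym)
    then show ?thesis using eE by auto
  next
    case False
    have vi: "v \<in> internal_vertices VY EY" using False v tosD(4)[OF TY]
      unfolding internal_vertices_def by auto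
    have wi: "F v \<in> internal_vertices VZ EZ" using tcD(6)[OF C] vi by auto
    define w where "w = F v"
    have bc: "branched_covering (SY v) (SZ w) (f v)"
      and cov: "covering_space (SY v - marked_points EY iY v) (f v) (SZ w - marked_points EZ iZ w)"
      and comm: "\<forall>e \<in> edges_at EY v. f v (iY v e) = iZ w (F ` e)"
      using tcD(7)[OF C vi] unfolding w_def by auto
    have e'w: "e' \<in> edges_at EZ w" using e' Fv unfolding edges_at_def w_def by auto
    have injZ: "inj_on (iZ w) (edges_at EZ w)" and subZ: "iZ w ` edges_at EZ w \<subseteq> SZ w"
      using tosD(5)[OF TZ wi] unfolding w_def by auto
    have "iZ w e' \<in> SZ w" using subZ e'w by auto
    moreover have "f v ` SY v = SZ w" using bc unfolding branched_covering_def by blast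
    ultimately have "iZ w e' \<in> f v ` SY v" by simp
    then obtain x where x0: "iZ w e' = f v x" "x \<in> SY v" by (rule imageE)
    have x: "x \<in> SY v" "f v x = iZ w e'" using x0 by simp_all
    have mZ: "iZ w e' \<in> marked_points EZ iZ w" using e'w unfolding marked_points_def by auto
    have "x \<in> marked_points EY iY v"
    proof (rule ccontr)
      assume "x \<notin> marked_points EY iY v"
      hence "f v x \<in> SZ w - marked_points EZ iZ w"
        using covering_space_imp_surjective[OF cov] x(1) by auto
      thus False using x(2) mZ by auto
    qed
    then obtain e where e: "e \<in> edges_at EY v" "x = iY v e" unfolding marked_points_def by auto
    have "F ` e \<in> edges_at EZ w" using e imgE unfolding edges_at_def w_def by auto
    moreover have "iZ w (F ` e) = iZ w e'" using comm e x by auto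
    ultimately have "F ` e = e'" using injZ e'w by (meson inj_onD)
    then show ?thesis using e unfolding edges_at_def by auto
  qed
qed

theorem corollary2p20:
  fixes VY :: "'v set" and EY :: "'v set set" and Y :: "'v set"
    and SY :: "'v \<Rightarrow> 'p::topological_space set" and iY :: "'v \<Rightarrow> 'v set \<Rightarrow> 'p"
    and VZ :: "'w set" and EZ :: "'w set set" and Z :: "'w set"
    and SZ :: "'w \<Rightarrow> 'q::topological_space set" and iZ :: "'w \<Rightarrow> 'w set \<Rightarrow> 'q"
    and F :: "'v \<Rightarrow> 'w" and f :: "'v \<Rightarrow> 'p \<Rightarrow> 'q"
  assumes "tree_cover VY EY Y SY iY VZ EZ Z SZ iZ F f"
  shows "F ` VY = VZ \<and> (\<lambda>e. F ` e) ` EY = EZ"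
proof -
  note C = assms
  note TY = tcD(1)[OF C] and TZ = tcD(2)[OF C]
  note edgesY = tosD(1)[OF TY] and edgesZ = tosD(1)[OF TZ]
  note conn = tosD(2)[OF TZ] and ne = tosD(3)[OF TY]
  have imgE: "F ` e \<in> EZ" if "e \<in> EY" for e
  proof -
    have "card e = 2" using edgesY that by blast
    then obtain a b where ab: "e = {a, b}" using card_2_iff[of e] by blast
    have "{F a, F b} \<in> EZ" using tcD(4)[OF C, of a b] that ab by simp
    then show ?thesis using ab by simp
  qed
  have sub: "F ` VY \<subseteq> VZ" using tcD(3)[OF C] .
  have reach: "(a, b) \<in> (adj EZ)\<^sup>* \<Longrightarrow> a \<in> F ` VY \<Longrightarrow> b \<in> F ` VY" for a b
  proof (induction rule: rtrancl_induct)
    case base thus ?case .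
  next
    case (step b c)
    have bc: "{b, c} \<in> EZ" using step(2) unfolding adj_def by auto
    obtain v where v: "v \<in> VY" "F v = b" using step by auto
    obtain e where e: "e \<in> EY" "v \<in> e" "F ` e = {b, c}"
      using step_lemma[OF C v(1) bc] v by auto
    have "card e = 2" using edgesY e(1) by blast
    hence "\<exists>u. u \<noteq> v \<and> e = {v, u}" using e(2) by (rule card2_edge)
    then obtain u where u0: "u \<noteq> v \<and> e = {v, u}" ..
    hence u: "u \<noteq> v" "e = {v, u}" by simp_all
    have "card {b, c} = 2" using edgesZ bc by auto
    hence "b \<noteq> c" by auto
    hence "F u = c" using e(3) u v by (auto simp: doubleton_eq_iff)
    moreover have "u \<in> VY" using edgesY e u by auto
    ultimately show ?case by auto
  qed
  have V: "F ` VY = VZ"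
  proof
    show "VZ \<subseteq> F ` VY"
    proof
      fix x assume x: "x \<in> VZ"
      obtain v where "v \<in> VY" using ne by auto
      hence "F v \<in> VZ" using sub by auto
      thus "x \<in> F ` VY" using reach conn x \<open>v \<in> VY\<close> by blast
    qed
  qed (rule sub)
  have "EZ \<subseteq> (\<lambda>e. F ` e) ` EY"
  proof
    fix e' assume e': "e' \<in> EZ"
    hence "card e' = 2" using edgesZ by auto
    then obtain a where a: "a \<in> e'" by fastforce
    hence "a \<in> VZ" using edgesZ e' by auto
    then obtain v where "v \<in> VY" "F v = a" using V by auto
    then show "e' \<in> (\<lambda>e. F ` e) ` EY" using step_lemma[OF C _ e'] a by blast
  qed
  with imgE V show ?thesis by blast
qed

end
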